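(* The family of all finite connected graphs together with all confluent epimorphisms between them is a projective Fraïssé family.
   Context: A graph is a pair $A=(V(A),E(A))$ with $E(A)\subseteq V(A)^2$ reflexive and symmetric. An epimorphism $f\colon A\to B$ is a map $V(A)\to V(B)$ sending edges to edges and surjective on vertices and on edges. A set $S\subseteq V(G)$ is disconnected if $S=P\cup Q$ with $P,Q$ nonempty disjoint and no edge of $G$ between $P$ and $Q$; otherwise connected. The component of $S$ containing $a\in S$ is the largest connected subset of $S$ containing $a$. An epimorphism $f\colon G\to H$ is confluent if for every connected $Q\subseteq V(H)$ and every component $C$ of $f^{-1}(Q)$ we have $f(C)=Q$. A class $\mathcal F$ of finite graphs with a fixed class of epimorphisms is a projective Fraïssé family if: (1) it has countably many isomorphism types; (2) the fixed epimorphisms are closed under composition and include identities; (3) for $B,C\in\mathcal F$ there are $D\in\mathcal F$ and fixed epimorphisms $D\to B$, $D\to C$; (4) for fixed epimorphisms $f\colon B\to A$, $g\colon C\to A$ there are $D\in\mathcal F$ and fixed epimorphisms $f_0\colon D\to B$, $g_0\colon D\to C$ with $f\circ f_0=g\circ g_0$. *)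

theory Defs
  imports Main "HOL-Library.Countable_Set"
begin

text \<open>A graph is a pair (V, E) with E a reflexive symmetric relation on V.
  Vertices are drawn from nat (every finite graph is isomorphic to one of these).\<close>

type_synonym graph = "nat set \<times> (nat \<times> nat) set"

definition verts :: "graph \<Rightarrow> nat set" where "verts G = fst G"
definition edges :: "graph \<Rightarrow> (nat \<times> nat) set" where "edges G = snd G"

definition is_graph :: "graph \<Rightarrow> bool" where
  "is_graph G \<longleftrightarrow> edges G \<subseteq> verts G \<times> verts G
     \<and> (\<forall>x\<in>verts G. (x, x) \<in> edges G)
     \<and> (\<forall>x y. (x, y) \<in> edges G \<longrightarrow> (y, x) \<in> edges G)"

definition epimorphism :: "graph \<Rightarrow> graph \<Rightarrow> (nat \<Rightarrow> nat) \<Rightarrow> bool" where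
  "epimorphism A B f \<longleftrightarrow>
     (\<forall>x y. (x, y) \<in> edges A \<longrightarrow> (f x, f y) \<in> edges B)
     \<and> f ` verts A = verts B
     \<and> (\<lambda>(x, y). (f x, f y)) ` edges A = edges B"

definition disconnected_set :: "graph \<Rightarrow> nat set \<Rightarrow> bool" where
  "disconnected_set G S \<longleftrightarrow> (\<exists>P Q. S = P \<union> Q \<and> P \<noteq> {} \<and> Q \<noteq> {} \<and> P \<inter> Q = {}
      \<and> (\<forall>p\<in>P. \<forall>q\<in>Q. (p, q) \<notin> edges G))"

definition connected_set :: "graph \<Rightarrow> nat set \<Rightarrow> bool" where
  "connected_set G S \<longleftrightarrow> \<not> disconnected_set G S"

definition is_component_at :: "graph \<Rightarrow> nat set \<Rightarrow> nat \<Rightarrow> nat set \<Rightarrow> bool" where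
  "is_component_at G S a C \<longleftrightarrow> C \<subseteq> S \<and> a \<in> C \<and> connected_set G C
     \<and> (\<forall>C'. C' \<subseteq> S \<and> a \<in> C' \<and> connected_set G C' \<longrightarrow> C' \<subseteq> C)"

definition is_component :: "graph \<Rightarrow> nat set \<Rightarrow> nat set \<Rightarrow> bool" where
  "is_component G S C \<longleftrightarrow> (\<exists>a\<in>S. is_component_at G S a C)"

definition confluent :: "graph \<Rightarrow> graph \<Rightarrow> (nat \<Rightarrow> nat) \<Rightarrow> bool" where
  "confluent G H f \<longleftrightarrow> epimorphism G H f \<and>
     (\<forall>Q C. Q \<subseteq> verts H \<and> connected_set H Q
        \<and> is_component G {x \<in> verts G. f x \<in> Q} C \<longrightarrow> f ` C = Q)"

definition graph_iso :: "graph \<Rightarrow> graph \<Rightarrow> bool" where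
  "graph_iso A B \<longleftrightarrow> (\<exists>h. bij_betw h (verts A) (verts B)
     \<and> (\<forall>x\<in>verts A. \<forall>y\<in>verts A. (x, y) \<in> edges A \<longleftrightarrow> (h x, h y) \<in> edges B))"

definition projective_Fraisse_family ::
  "graph set \<Rightarrow> (graph \<Rightarrow> graph \<Rightarrow> (nat \<Rightarrow> nat) \<Rightarrow> bool) \<Rightarrow> bool" where
  "projective_Fraisse_family F M \<longleftrightarrow>
     (\<forall>A\<in>F. is_graph A \<and> finite (verts A))
   \<and> (\<forall>A B f. M A B f \<longrightarrow> A \<in> F \<and> B \<in> F \<and> epimorphism A B f)
   \<and> countable (F // {(A, B). A \<in> F \<and> B \<in> F \<and> graph_iso A B})
   \<and> (\<forall>A B C f g. M A B f \<and> M B C g \<longrightarrow> M A C (g \<circ> f))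
   \<and> (\<forall>A\<in>F. M A A id)
   \<and> (\<forall>B\<in>F. \<forall>C\<in>F. \<exists>D\<in>F. \<exists>f g. M D B f \<and> M D C g)
   \<and> (\<forall>A B C f g. M B A f \<and> M C A g \<longrightarrow>
        (\<exists>D\<in>F. \<exists>f0 g0. M D B f0 \<and> M D C g0
           \<and> (\<forall>x\<in>verts D. f (f0 x) = g (g0 x))))"

definition finite_connected_graphs :: "graph set" where
  "finite_connected_graphs = {G. is_graph G \<and> finite (verts G) \<and> verts G \<noteq> {}
                                 \<and> connected_set G (verts G)}"

definition confluent_epis :: "graph \<Rightarrow> graph \<Rightarrow> (nat \<Rightarrow> nat) \<Rightarrow> bool" where
  "confluent_epis A B f \<longleftrightarrow> A \<in> finite_connected_graphs \<and> B \<in> finite_connected_graphs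
     \<and> confluent A B f"

end

theory Submission
  imports Defs
begin

lemma connected_setI:
  assumes "\<And>P Q. S = P \<union> Q \<Longrightarrow> P \<noteq> {} \<Longrightarrow> Q \<noteq> {} \<Longrightarrow> P \<inter> Q = {} \<Longrightarrow> \<exists>p\<in>P. \<exists>q\<in>Q. (p,q) \<in> edges G"
  shows "connected_set G S"
  using assms unfolding connected_set_def disconnected_set_def by blast

lemma connected_setD:
  assumes "connected_set G S" "S = P \<union> Q" "P \<noteq> {}" "Q \<noteq> {}" "P \<inter> Q = {}"
  shows "\<exists>p\<in>P. \<exists>q\<in>Q. (p,q) \<in> edges G"
  using assms unfolding connected_set_def disconnected_set_def by blast

lemma connected_setD':
  assumes "connected_set G S" "X \<subseteq> S" "X \<noteq> {}" "X \<noteq> S"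
  shows "\<exists>p\<in>X. \<exists>q\<in>S - X. (p,q) \<in> edges G"
  using connected_setD[OF assms(1), of X "S - X"] assms by blast

lemma connected_singleton: "connected_set G {a}"
proof (rule connected_setI)
  fix P Q assume h: "{a} = P \<union> Q" "P \<noteq> {}" "Q \<noteq> {}" "P \<inter> Q = {}"
  have "P \<subseteq> {a}" "Q \<subseteq> {a}" using h(1) by auto
  then have "P = {a}" "Q = {a}" using h(2,3) subset_singleton_iff by auto
  then show "\<exists>p\<in>P. \<exists>q\<in>Q. (p, q) \<in> edges G" using h(4) by auto
qed

lemma connected_pair:
  assumes "(x,y) \<in> edges G" "(y,x) \<in> edges G"
  shows "connected_set G {x,y}"
proof (rule connected_setI)
  fix P Q assume h: "{x,y} = P \<union> Q" "P \<noteq> {}" "Q \<noteq> {}" "P \<inter> Q = {}"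
  have PQ: "P \<subseteq> {x,y}" "Q \<subseteq> {x,y}" using h(1) by auto
  show "\<exists>p\<in>P. \<exists>q\<in>Q. (p, q) \<in> edges G"
  proof (cases "x \<in> P")
    case True
    then have "x \<notin> Q" using h(4) by auto
    obtain z where "z \<in> Q" using h(3) by auto
    then have "z = y" using PQ \<open>x \<notin> Q\<close> by auto
    then show ?thesis using True \<open>z \<in> Q\<close> assms by auto
  next
    case False
    then have "x \<in> Q" using h(1) by auto
    obtain z where "z \<in> P" using h(2) by auto
    then have "z = y" using PQ False by auto
    then show ?thesis using \<open>x \<in> Q\<close> \<open>z \<in> P\<close> assms by auto
  qed
qed

lemma connected_Union:
  assumes "\<And>X. X \<in> F \<Longrightarrow> connected_set G X \<and> a \<in> X"
  shows "connected_set G (\<Union>F)"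
proof (rule connected_setI)
  fix P Q assume h: "\<Union>F = P \<union> Q" "P \<noteq> {}" "Q \<noteq> {}" "P \<inter> Q = {}"
  show "\<exists>p\<in>P. \<exists>q\<in>Q. (p, q) \<in> edges G"
  proof (cases "a \<in> P")
    case True
    obtain q where q: "q \<in> Q" using h by blast
    then obtain X where X: "X \<in> F" "q \<in> X" using h(1) by (metis UnCI UnionE)
    have "X = X \<inter> P \<union> X \<inter> Q" using X h(1) by auto
    moreover have "X \<inter> P \<noteq> {}" using True assms[OF X(1)] by auto
    moreover have "X \<inter> Q \<noteq> {}" using X q by auto
    moreover have "X \<inter> P \<inter> (X \<inter> Q) = {}" using h(4) by auto
    ultimately have "\<exists>p\<in>X \<inter> P. \<exists>q\<in>X \<inter> Q. (p,q) \<in> edges G"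
      using connected_setD[of G X "X \<inter> P" "X \<inter> Q"] assms[OF X(1)] by blast
    then show ?thesis by blast
  next
    case False
    obtain p where p: "p \<in> P" using h by blast
    then obtain X where X: "X \<in> F" "p \<in> X" using h(1) by (metis UnCI UnionE)
    have "a \<in> \<Union>F" using assms X by auto
    then have aQ: "a \<in> Q" using False h(1) by auto
    have "X = X \<inter> P \<union> X \<inter> Q" using X h(1) by auto
    moreover have "X \<inter> Q \<noteq> {}" using aQ assms[OF X(1)] by auto
    moreover have "X \<inter> P \<noteq> {}" using X p by auto
    moreover have "X \<inter> P \<inter> (X \<inter> Q) = {}" using h(4) by auto
    ultimately have "\<exists>p\<in>X \<inter> P. \<exists>q\<in>X \<inter> Q. (p,q) \<in> edges G"
      using connected_setD[of G X "X \<inter> P" "X \<inter> Q"] assms[OF X(1)] by blast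
    then show ?thesis by blast
  qed
qed

lemma connected_Un:
  assumes "connected_set G X" "connected_set G Y" "a \<in> X" "a \<in> Y"
  shows "connected_set G (X \<union> Y)"
proof -
  have "connected_set G (\<Union>{X,Y})"
    by (rule connected_Union[where a=a]) (use assms in blast)
  then show ?thesis by simp
qed

lemma connected_image:
  assumes "connected_set G S"
    "\<And>x y. x \<in> S \<Longrightarrow> y \<in> S \<Longrightarrow> (x,y) \<in> edges G \<Longrightarrow> (h x, h y) \<in> edges H"
  shows "connected_set H (h ` S)"
proof (rule connected_setI)
  fix P Q assume hh: "h ` S = P \<union> Q" "P \<noteq> {}" "Q \<noteq> {}" "P \<inter> Q = {}"
  have "\<exists>p\<in>{x\<in>S. h x \<in> P}. \<exists>q\<in>{x\<in>S. h x \<in> Q}. (p,q) \<in> edges G"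
  proof (rule connected_setD[OF assms(1)])
    show "S = {x \<in> S. h x \<in> P} \<union> {x \<in> S. h x \<in> Q}" using hh(1) by auto
    show "{x \<in> S. h x \<in> P} \<noteq> {}" using hh(1,2) by (metis (mono_tags, lifting) UnCI empty_Collect_eq equals0I imageE)
    show "{x \<in> S. h x \<in> Q} \<noteq> {}" using hh(1,3) by (metis (mono_tags, lifting) UnCI empty_Collect_eq equals0I imageE)
    show "{x \<in> S. h x \<in> P} \<inter> {x \<in> S. h x \<in> Q} = {}" using hh(4) by auto
  qed
  then show "\<exists>p\<in>P. \<exists>q\<in>Q. (p, q) \<in> edges H" using assms(2) by blast
qed

lemma connected_set_cong1:
  assumes "\<And>x y. x \<in> S \<Longrightarrow> y \<in> S \<Longrightarrow> (x,y) \<in> edges G \<Longrightarrow> (x,y) \<in> edges H"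
    and "connected_set G S"
  shows "connected_set H S"
proof (rule connected_setI)
  fix P Q assume h: "S = P \<union> Q" "P \<noteq> {}" "Q \<noteq> {}" "P \<inter> Q = {}"
  obtain p q where "p \<in> P" "q \<in> Q" "(p,q) \<in> edges G" using connected_setD[OF assms(2) h] by blast
  moreover have "p \<in> S" "q \<in> S" using h(1) calculation by auto
  ultimately show "\<exists>p\<in>P. \<exists>q\<in>Q. (p, q) \<in> edges H" using assms(1) by blast
qed

lemma connected_set_cong:
  assumes "\<And>x y. x \<in> S \<Longrightarrow> y \<in> S \<Longrightarrow> (x,y) \<in> edges G \<longleftrightarrow> (x,y) \<in> edges H"
  shows "connected_set G S \<longleftrightarrow> connected_set H S"
proof
  assume "connected_set G S" then show "connected_set H S"
    by (rule connected_set_cong1[rotated]) (use assms in blast)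
next
  assume "connected_set H S" then show "connected_set G S"
    by (rule connected_set_cong1[rotated]) (use assms in blast)
qed

lemma component_exists:
  assumes "a \<in> S" shows "\<exists>C. is_component_at G S a C"
proof -
  let ?C = "\<Union>{C. C \<subseteq> S \<and> a \<in> C \<and> connected_set G C}"
  have "connected_set G ?C" by (rule connected_Union[where a=a]) blast
  moreover have "{a} \<in> {C. C \<subseteq> S \<and> a \<in> C \<and> connected_set G C}"
    using connected_singleton[of G a] assms by simp
  then have "a \<in> ?C" by blast
  moreover have "?C \<subseteq> S" by blast
  moreover have "\<forall>C'. C' \<subseteq> S \<and> a \<in> C' \<and> connected_set G C' \<longrightarrow> C' \<subseteq> ?C" by blast
  ultimately show ?thesis unfolding is_component_at_def by blast
qed

lemma component_closed:
  assumes "is_component_at G S a K" "X \<subseteq> S" "connected_set G X" "x \<in> X" "x \<in> K"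
  shows "X \<subseteq> K"
proof -
  have "connected_set G (K \<union> X)"
    using connected_Un[of G K X x] assms unfolding is_component_at_def by simp
  moreover have "K \<subseteq> S" "a \<in> K" using assms(1) unfolding is_component_at_def by simp_all
  ultimately have "K \<union> X \<subseteq> K" using assms(1,2) unfolding is_component_at_def
    by (metis Un_iff le_sup_iff)
  then show ?thesis by blast
qed

lemma component_of_connected:
  assumes "connected_set G S" "is_component G S C"
  shows "C = S"
proof -
  obtain a where "a \<in> S" "is_component_at G S a C" using assms(2) unfolding is_component_def by blast
  then show ?thesis using assms(1) unfolding is_component_at_def by blast
qed

definition weakconf :: "graph \<Rightarrow> graph \<Rightarrow> (nat \<Rightarrow> nat) \<Rightarrow> bool" where
  "weakconf G H f \<longleftrightarrow> (\<forall>Q C. Q \<subseteq> verts H \<and> connected_set H Q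
        \<and> is_component G {x \<in> verts G. f x \<in> Q} C \<longrightarrow> f ` C = Q)"

lemma confluent_iff: "confluent G H f \<longleftrightarrow> epimorphism G H f \<and> weakconf G H f"
  unfolding confluent_def weakconf_def by blast

lemma weakconfD:
  assumes "weakconf G H f" "Q \<subseteq> verts H" "connected_set H Q" "is_component_at G {x \<in> verts G. f x \<in> Q} a C"
  shows "f ` C = Q"
proof -
  have "a \<in> {x \<in> verts G. f x \<in> Q}" using assms(4) unfolding is_component_at_def by blast
  then have "is_component G {x \<in> verts G. f x \<in> Q} C" using assms(4) unfolding is_component_def by blast
  then show ?thesis using assms(1-3) unfolding weakconf_def by blast
qed

lemma epi_edge: "epimorphism A B f \<Longrightarrow> (x,y) \<in> edges A \<Longrightarrow> (f x, f y) \<in> edges B"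
  unfolding epimorphism_def by blast

lemma epi_vert: "epimorphism A B f \<Longrightarrow> x \<in> verts A \<Longrightarrow> f x \<in> verts B"
  unfolding epimorphism_def by blast

lemma epi_verts: "epimorphism A B f \<Longrightarrow> f ` verts A = verts B"
  unfolding epimorphism_def by simp

lemma epi_edges: "epimorphism A B f \<Longrightarrow> (\<lambda>(x, y). (f x, f y)) ` edges A = edges B"
  unfolding epimorphism_def by simp

lemma epimorphismI:
  assumes "\<And>x y. (x, y) \<in> edges A \<Longrightarrow> (f x, f y) \<in> edges B" "f ` verts A = verts B"
    "(\<lambda>(x, y). (f x, f y)) ` edges A = edges B"
  shows "epimorphism A B f"
  unfolding epimorphism_def using assms by simp

lemma epi_comp:
  assumes "epimorphism A B f" "epimorphism B C g"
  shows "epimorphism A C (g \<circ> f)"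
proof -
  have 1: "\<And>x y. (x, y) \<in> edges A \<Longrightarrow> ((g \<circ> f) x, (g \<circ> f) y) \<in> edges C"
    using epi_edge[OF assms(1)] epi_edge[OF assms(2)] by simp
  have "f ` verts A = verts B" "g ` verts B = verts C" using assms epi_verts by auto
  moreover have "(g \<circ> f) ` verts A = g ` (f ` verts A)" by (simp only: image_comp)
  ultimately have 2: "(g \<circ> f) ` verts A = verts C" by simp
  have fe: "(\<lambda>(x, y). ((g \<circ> f) x, (g \<circ> f) y)) = (\<lambda>(x, y). (g x, g y)) \<circ> (\<lambda>(x, y). (f x, f y))"
    by (rule ext) (simp split: prod.splits)
  have "(\<lambda>(x, y). ((g \<circ> f) x, (g \<circ> f) y)) ` edges A
      = (\<lambda>(x, y). (g x, g y)) ` ((\<lambda>(x, y). (f x, f y)) ` edges A)"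
    unfolding fe by (simp only: image_comp)
  also have "\<dots> = edges C" using assms epi_edges by simp
  finally show ?thesis using 1 2 by (intro epimorphismI)
qed

lemma weakconf_comp:
  assumes ef: "epimorphism A B f" and eg: "epimorphism B C g"
    and wf: "weakconf A B f" and wg: "weakconf B C g"
  shows "weakconf A C (g \<circ> f)"
  unfolding weakconf_def
proof (intro allI impI, elim conjE)
  fix Q K assume Q: "Q \<subseteq> verts C" "connected_set C Q"
    and K: "is_component A {x \<in> verts A. (g \<circ> f) x \<in> Q} K"
  let ?S = "{x \<in> verts A. (g \<circ> f) x \<in> Q}"
  obtain a where a: "a \<in> ?S" "is_component_at A ?S a K" using K unfolding is_component_def by blast
  have KS: "K \<subseteq> ?S" "a \<in> K" "connected_set A K"
    and Kmax: "\<And>C'. C' \<subseteq> ?S \<Longrightarrow> a \<in> C' \<Longrightarrow> connected_set A C' \<Longrightarrow> C' \<subseteq> K"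
    using a(2) unfolding is_component_at_def by blast+
  let ?T = "{y \<in> verts B. g y \<in> Q}"
  have faT: "f a \<in> ?T" using a(1) epi_vert[OF ef] by auto
  obtain L where L: "is_component_at B ?T (f a) L" using component_exists[OF faT] by blast
  have LT: "L \<subseteq> ?T" "f a \<in> L" "connected_set B L" using L unfolding is_component_at_def by blast+
  have gL: "g ` L = Q" using weakconfD[OF wg Q L] .
  have fKconn: "connected_set B (f ` K)"
    by (rule connected_image[OF KS(3)]) (use epi_edge[OF ef] in blast)
  have fKT: "f ` K \<subseteq> ?T" using KS(1) epi_vert[OF ef] by auto
  have fKL: "f ` K \<subseteq> L" by (rule component_closed[OF L fKT fKconn, of "f a"]) (use KS LT in auto)
  have Kc: "is_component_at A {x \<in> verts A. f x \<in> L} a K"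
    unfolding is_component_at_def
  proof (intro conjI allI impI)
    show "K \<subseteq> {x \<in> verts A. f x \<in> L}" using fKL KS(1) by auto
    show "a \<in> K" "connected_set A K" using KS by auto
    fix C' assume C': "C' \<subseteq> {x \<in> verts A. f x \<in> L} \<and> a \<in> C' \<and> connected_set A C'"
    have "C' \<subseteq> ?S" using C' LT(1) by auto
    then show "C' \<subseteq> K" using Kmax C' by blast
  qed
  have LB: "L \<subseteq> verts B" using LT by auto
  have "f ` K = L" using weakconfD[OF wf LB LT(3) Kc] .
  moreover have "(g \<circ> f) ` K = g ` (f ` K)" by (simp only: image_comp)
  ultimately show "(g \<circ> f) ` K = Q" using gL by simp
qed

lemma weakconf_id:
  shows "weakconf A A id"
  unfolding weakconf_def
proof (intro allI impI, elim conjE)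
  fix Q K assume Q: "Q \<subseteq> verts A" "connected_set A Q"
    and K: "is_component A {x \<in> verts A. id x \<in> Q} K"
  have "{x \<in> verts A. id x \<in> Q} = Q" using Q by auto
  then have "K = Q" using component_of_connected[OF Q(2)] K by simp
  then show "id ` K = Q" by simp
qed

lemma epi_id: "epimorphism A A id"
proof -
  have "(\<lambda>(x, y). (id x, id y)) = (id :: nat \<times> nat \<Rightarrow> _)" by (rule ext) (simp split: prod.splits)
  then show ?thesis unfolding epimorphism_def by simp
qed

lemma graph_refl: "is_graph G \<Longrightarrow> x \<in> verts G \<Longrightarrow> (x,x) \<in> edges G"
  unfolding is_graph_def by blast

lemma graph_sym: "is_graph G \<Longrightarrow> (x,y) \<in> edges G \<Longrightarrow> (y,x) \<in> edges G"
  unfolding is_graph_def by blast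

lemma graph_ev: "is_graph G \<Longrightarrow> (x,y) \<in> edges G \<Longrightarrow> x \<in> verts G \<and> y \<in> verts G"
  unfolding is_graph_def by blast

lemma epi_from_weakconf:
  assumes gG: "is_graph G" and gH: "is_graph H"
    and cG: "connected_set G (verts G)" and ne: "verts G \<noteq> {}"
    and cH: "connected_set H (verts H)"
    and ed: "\<And>x y. (x,y) \<in> edges G \<Longrightarrow> (f x, f y) \<in> edges H"
    and w: "weakconf G H f"
  shows "epimorphism G H f"
proof -
  have fV: "f x \<in> verts H" if "x \<in> verts G" for x
    using graph_ev[OF gH ed[OF graph_refl[OF gG that]]] by simp
  have S: "{x \<in> verts G. f x \<in> verts H} = verts G" using fV by auto
  obtain a where a: "a \<in> verts G" using ne by blast
  have "is_component_at G (verts G) a (verts G)"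
    unfolding is_component_at_def using a cG by blast
  then have "is_component_at G {x \<in> verts G. f x \<in> verts H} a (verts G)" using S by simp
  then have V: "f ` verts G = verts H" using weakconfD[OF w _ cH] by simp
  have E1: "(\<lambda>(x, y). (f x, f y)) ` edges G \<subseteq> edges H" using ed by auto
  have E2: "(b, b') \<in> (\<lambda>(x, y). (f x, f y)) ` edges G" if bb: "(b, b') \<in> edges H" for b b'
  proof -
    have bV: "b \<in> verts H" "b' \<in> verts H" using graph_ev[OF gH bb] by auto
    obtain n where n: "n \<in> verts G" "f n = b" using V bV by (metis imageE)
    show ?thesis
    proof (cases "b = b'")
      case True
      have "(n,n) \<in> edges G" using graph_refl[OF gG n(1)] .
      then show ?thesis using n True by force
    next
      case False
      let ?S = "{x \<in> verts G. f x \<in> {b,b'}}"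
      have nS: "n \<in> ?S" using n by simp
      obtain K where K: "is_component_at G ?S n K" using component_exists[OF nS] by blast
      have Qc: "connected_set H {b,b'}" using connected_pair[OF bb graph_sym[OF gH bb]] .
      have fK: "f ` K = {b,b'}" using weakconfD[OF w _ Qc K] bV by simp
      have KS: "K \<subseteq> ?S" "n \<in> K" "connected_set G K" using K unfolding is_component_at_def by blast+
      let ?X = "{x \<in> K. f x = b}"
      have "?X \<subseteq> K" by blast
      moreover have "?X \<noteq> {}" using KS n by blast
      moreover have "?X \<noteq> K"
      proof -
        have "b' \<in> f ` K" using fK by simp
        then obtain m where "m \<in> K" "f m = b'" by blast
        then show ?thesis using False by (metis (mono_tags, lifting) mem_Collect_eq)
      qed
      ultimately obtain x y where xy: "x \<in> ?X" "y \<in> K - ?X" "(x,y) \<in> edges G"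
        using connected_setD'[OF KS(3)] by meson
      have "f y \<in> {b,b'}" using xy KS(1) by blast
      then have "f y = b'" using xy by auto
      moreover have "f x = b" using xy by simp
      ultimately show ?thesis using xy(3) by force
    qed
  qed
  have "(\<lambda>(x, y). (f x, f y)) ` edges G = edges H" using E1 E2 by auto
  then show ?thesis using ed V by (intro epimorphismI)
qed

definition restr :: "graph \<Rightarrow> nat set \<Rightarrow> graph" where
  "restr P D0 = (D0, {e \<in> edges P. fst e \<in> D0 \<and> snd e \<in> D0})"

lemma restr_verts[simp]: "verts (restr P D0) = D0"
  unfolding restr_def verts_def by simp

lemma restr_edges: "(x,y) \<in> edges (restr P D0) \<longleftrightarrow> (x,y) \<in> edges P \<and> x \<in> D0 \<and> y \<in> D0"
  unfolding restr_def edges_def by simp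

lemma restr_conn:
  assumes "S \<subseteq> D0"
  shows "connected_set (restr P D0) S \<longleftrightarrow> connected_set P S"
  by (rule connected_set_cong) (use assms restr_edges in blast)

lemma restr_graph:
  assumes "is_graph P" "D0 \<subseteq> verts P"
  shows "is_graph (restr P D0)"
  unfolding is_graph_def
proof (intro conjI ballI allI impI)
  show "edges (restr P D0) \<subseteq> verts (restr P D0) \<times> verts (restr P D0)"
    by (auto simp add: restr_edges)
  fix x assume "x \<in> verts (restr P D0)"
  then show "(x, x) \<in> edges (restr P D0)" using assms graph_refl[OF assms(1)] by (auto simp: restr_edges)
next
  fix x y assume "(x, y) \<in> edges (restr P D0)"
  then show "(y, x) \<in> edges (restr P D0)" using assms graph_sym[OF assms(1)] by (auto simp: restr_edges)
qed

lemma restr_weakconf: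
  assumes D0: "is_component_at P (verts P) n0 D0" and w: "weakconf P B p"
  shows "weakconf (restr P D0) B p"
  unfolding weakconf_def
proof (intro allI impI, elim conjE)
  fix Q K assume Q: "Q \<subseteq> verts B" "connected_set B Q"
    and K: "is_component (restr P D0) {x \<in> verts (restr P D0). p x \<in> Q} K"
  have D0P: "D0 \<subseteq> verts P" using D0 unfolding is_component_at_def by blast
  let ?SD = "{x \<in> D0. p x \<in> Q}"
  let ?SP = "{x \<in> verts P. p x \<in> Q}"
  obtain a where a: "a \<in> ?SD" "is_component_at (restr P D0) ?SD a K"
    using K unfolding is_component_def by auto
  have KS: "K \<subseteq> ?SD" "a \<in> K" "connected_set (restr P D0) K"
    and Kmax: "\<And>C'. C' \<subseteq> ?SD \<Longrightarrow> a \<in> C' \<Longrightarrow> connected_set (restr P D0) C' \<Longrightarrow> C' \<subseteq> K"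
    using a(2) unfolding is_component_at_def by blast+
  have KP: "is_component_at P ?SP a K"
    unfolding is_component_at_def
  proof (intro conjI allI impI)
    show "K \<subseteq> ?SP" using KS D0P by blast
    show "a \<in> K" using KS by simp
    have "K \<subseteq> D0" using KS by blast
    then show "connected_set P K" using KS(3) restr_conn by blast
    fix C' assume C': "C' \<subseteq> ?SP \<and> a \<in> C' \<and> connected_set P C'"
    have "C' \<subseteq> D0"
      by (rule component_closed[OF D0, of C' a]) (use C' a(1) in auto)
    then have "C' \<subseteq> ?SD" "connected_set (restr P D0) C'" using C' restr_conn by blast+
    then show "C' \<subseteq> K" using Kmax C' by blast
  qed
  show "p ` K = Q" using weakconfD[OF w Q KP] .
qed

lemma pullback_weakconf:
  assumes gA: "is_graph A" and gB: "is_graph B" and gC: "is_graph C" and gP: "is_graph P"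
    and ef: "epimorphism B A f" and cg: "confluent C A g"
    and VP: "\<And>n. n \<in> verts P \<Longrightarrow> p n \<in> verts B \<and> r n \<in> verts C \<and> f (p n) = g (r n)"
    and real: "\<And>b c. b \<in> verts B \<Longrightarrow> c \<in> verts C \<Longrightarrow> f b = g c \<Longrightarrow> \<exists>n\<in>verts P. p n = b \<and> r n = c"
    and inj: "\<And>n m. n \<in> verts P \<Longrightarrow> m \<in> verts P \<Longrightarrow> p n = p m \<Longrightarrow> r n = r m \<Longrightarrow> n = m"
    and EP: "\<And>n m. (n,m) \<in> edges P \<longleftrightarrow> n \<in> verts P \<and> m \<in> verts P \<and> (p n, p m) \<in> edges B \<and> (r n, r m) \<in> edges C"
  shows "weakconf P B p"
  unfolding weakconf_def
proof (intro allI impI, elim conjE)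
  fix Q K assume Q: "Q \<subseteq> verts B" "connected_set B Q"
    and K: "is_component P {x \<in> verts P. p x \<in> Q} K"
  let ?S = "{x \<in> verts P. p x \<in> Q}"
  obtain a where a: "a \<in> ?S" "is_component_at P ?S a K" using K unfolding is_component_def by blast
  have KS: "K \<subseteq> ?S" "a \<in> K" "connected_set P K"
    using a(2) unfolding is_component_at_def by blast+
  have sub: "p ` K \<subseteq> Q" using KS by auto
  have wg: "weakconf C A g" and eg: "epimorphism C A g" using cg confluent_iff by auto
  show "p ` K = Q"
  proof (rule ccontr)
    assume ne: "p ` K \<noteq> Q"
    have "p ` K \<noteq> {}" using KS by auto
    then obtain q q' where qq: "q \<in> p ` K" "q' \<in> Q - p ` K" "(q,q') \<in> edges B"
      using connected_setD'[OF Q(2) sub _ ne] by blast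
    then obtain k where k: "k \<in> K" "p k = q" by auto
    define c where "c = r k"
    have kP: "k \<in> verts P" using k KS by auto
    have cC: "c \<in> verts C" and fq: "f q = g c" using VP[OF kP] k c_def by auto
    have qB: "q \<in> verts B" using VP[OF kP] k by auto
    have q'B: "q' \<in> verts B" using qq Q by auto
    have qQ: "q \<in> Q" using qq sub by auto
    have q'Q: "q' \<in> Q" using qq by auto
    have uv: "(f q, f q') \<in> edges A" using epi_edge[OF ef qq(3)] .
    have "q' \<in> p ` K"
    proof (cases "f q = f q'")
      case True
      obtain n' where n': "n' \<in> verts P" "p n' = q'" "r n' = c"
        using real[OF q'B cC] True fq by metis
      have e1: "(k,n') \<in> edges P" using EP kP n' k qq(3) c_def graph_refl[OF gC cC] by simp
      have e2: "(n',k) \<in> edges P" using graph_sym[OF gP e1] .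
      have cn: "connected_set P {k,n'}" using connected_pair[OF e1 e2] .
      have "{k,n'} \<subseteq> ?S" using kP n' qQ q'Q k by auto
      then have "{k,n'} \<subseteq> K" using component_closed[OF a(2) _ cn, of k] k by blast
      then show ?thesis using n' by auto
    next
      case False
      define u where "u = f q"
      define v where "v = f q'"
      have uvne: "u \<noteq> v" using False u_def v_def by simp
      have conn: "connected_set A {u,v}"
        using connected_pair[OF uv graph_sym[OF gA uv]] u_def v_def by simp
      have uvA: "{u,v} \<subseteq> verts A" using graph_ev[OF gA uv] u_def v_def by simp
      have cT: "c \<in> {x \<in> verts C. g x \<in> {u,v}}" using cC fq u_def by simp
      obtain L where L: "is_component_at C {x \<in> verts C. g x \<in> {u,v}} c L"
        using component_exists[OF cT] by blast
      have LT: "L \<subseteq> {x \<in> verts C. g x \<in> {u,v}}" "c \<in> L" "connected_set C L"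
        using L unfolding is_component_at_def by blast+
      have gL: "g ` L = {u,v}" using weakconfD[OF wg uvA conn L] .
      define \<beta> where "\<beta> d = (if g d = u then q else q')" for d
      define h where "h d = (SOME n. n \<in> verts P \<and> p n = \<beta> d \<and> r n = d)" for d
      have hprop: "h d \<in> verts P \<and> p (h d) = \<beta> d \<and> r (h d) = d" if d: "d \<in> L" for d
      proof -
        have dC: "d \<in> verts C" and gd: "g d \<in> {u,v}" using d LT by auto
        have bB: "\<beta> d \<in> verts B" using qB q'B \<beta>_def by simp
        have "f (\<beta> d) = g d" using gd u_def v_def \<beta>_def by auto
        then have "\<exists>n. n \<in> verts P \<and> p n = \<beta> d \<and> r n = d" using real[OF bB dC] by blast
        then show ?thesis unfolding h_def by (rule someI_ex)
      qed
      have hc: "h c = k"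
      proof -
        have "\<beta> c = q" using fq u_def \<beta>_def by simp
        then show ?thesis using hprop[OF LT(2)] inj kP k c_def by metis
      qed
      have bb: "(\<beta> d, \<beta> d') \<in> edges B" for d d'
        using graph_refl[OF gB qB] graph_refl[OF gB q'B] qq(3) graph_sym[OF gB qq(3)]
        unfolding \<beta>_def by auto
      have Mconn: "connected_set P (h ` L)"
      proof (rule connected_image[OF LT(3)])
        fix x y assume xy: "x \<in> L" "y \<in> L" "(x,y) \<in> edges C"
        show "(h x, h y) \<in> edges P" using EP hprop[OF xy(1)] hprop[OF xy(2)] bb xy(3) by simp
      qed
      have MS: "h ` L \<subseteq> ?S"
      proof
        fix n assume "n \<in> h ` L"
        then obtain d where d: "d \<in> L" "n = h d" by blast
        show "n \<in> ?S" using hprop[OF d(1)] d(2) qQ q'Q \<beta>_def by auto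
      qed
      have "k \<in> h ` L" using hc LT(2) by (metis imageI)
      then have MK: "h ` L \<subseteq> K" using component_closed[OF a(2) MS Mconn, of k] k by blast
      obtain d where d: "d \<in> L" "g d = v" using gL by (metis imageE insertCI)
      have "p (h d) = q'" using hprop[OF d(1)] d(2) uvne \<beta>_def by auto
      then show ?thesis using MK d(1) by (metis image_eqI subsetD)
    qed
    then show False using qq by auto
  qed
qed

lemma FD:
  assumes "G \<in> finite_connected_graphs"
  shows "is_graph G" "finite (verts G)" "verts G \<noteq> {}" "connected_set G (verts G)"
  using assms unfolding finite_connected_graphs_def by auto

lemma amalgamation:
  assumes "confluent_epis B A f" "confluent_epis C A g"
  shows "\<exists>D\<in>finite_connected_graphs. \<exists>f0 g0. confluent_epis D B f0 \<and> confluent_epis D C g0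
           \<and> (\<forall>x\<in>verts D. f (f0 x) = g (g0 x))"
proof -
  have FB: "B \<in> finite_connected_graphs" and FA: "A \<in> finite_connected_graphs"
    and FC: "C \<in> finite_connected_graphs" and cf: "confluent B A f" and cg: "confluent C A g"
    using assms unfolding confluent_epis_def by auto
  note gA = FD(1)[OF FA] and gB = FD(1)[OF FB] and gC = FD(1)[OF FC]
  have ef: "epimorphism B A f" and eg: "epimorphism C A g" using cf cg confluent_iff by auto
  define p where "p n = fst (prod_decode n)" for n
  define r where "r n = snd (prod_decode n)" for n
  define VP where "VP = {n. p n \<in> verts B \<and> r n \<in> verts C \<and> f (p n) = g (r n)}"
  define EP where "EP = {(n,m). n \<in> VP \<and> m \<in> VP \<and> (p n, p m) \<in> edges B \<and> (r n, r m) \<in> edges C}"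
  define P where "P = (VP, EP)"
  have vP: "verts P = VP" and eP: "edges P = EP" unfolding P_def verts_def edges_def by simp_all
  have gP: "is_graph P"
    unfolding is_graph_def vP eP
  proof (intro conjI ballI allI impI)
    show "EP \<subseteq> VP \<times> VP" unfolding EP_def by auto
    fix x assume "x \<in> VP"
    then show "(x,x) \<in> EP" unfolding EP_def VP_def using graph_refl[OF gB] graph_refl[OF gC] by auto
  next
    fix x y assume "(x,y) \<in> EP"
    then show "(y,x) \<in> EP" unfolding EP_def using graph_sym[OF gB] graph_sym[OF gC] by auto
  qed
  have VPp: "\<And>n. n \<in> verts P \<Longrightarrow> p n \<in> verts B \<and> r n \<in> verts C \<and> f (p n) = g (r n)"
    unfolding vP VP_def by simp
  have real: "\<And>b c. b \<in> verts B \<Longrightarrow> c \<in> verts C \<Longrightarrow> f b = g c \<Longrightarrow> \<exists>n\<in>verts P. p n = b \<and> r n = c"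
  proof -
    fix b c assume "b \<in> verts B" "c \<in> verts C" "f b = g c"
    then have "prod_encode (b,c) \<in> verts P \<and> p (prod_encode (b,c)) = b \<and> r (prod_encode (b,c)) = c"
      unfolding vP VP_def p_def r_def by simp
    then show "\<exists>n\<in>verts P. p n = b \<and> r n = c" by blast
  qed
  have enc: "n = prod_encode (p n, r n)" for n unfolding p_def r_def by simp
  have inj: "\<And>n m. n \<in> verts P \<Longrightarrow> m \<in> verts P \<Longrightarrow> p n = p m \<Longrightarrow> r n = r m \<Longrightarrow> n = m"
    using enc by metis
  have EPp: "\<And>n m. (n,m) \<in> edges P \<longleftrightarrow> n \<in> verts P \<and> m \<in> verts P \<and> (p n, p m) \<in> edges B \<and> (r n, r m) \<in> edges C"
    unfolding vP eP EP_def by simp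
  have wB: "weakconf P B p"
    by (rule pullback_weakconf[OF gA gB gC gP ef cg VPp real inj EPp])
  have wC: "weakconf P C r"
    by (rule pullback_weakconf[OF gA gC gB gP eg cf, of r p])
       (use VPp real inj EPp in \<open>metis+\<close>)
  obtain b where b: "b \<in> verts B" using FD(3)[OF FB] by blast
  have "f b \<in> verts A" using epi_vert[OF ef b] .
  then obtain c where c: "c \<in> verts C" "g c = f b" using epi_verts[OF eg] by (metis imageE)
  obtain n0 where n0: "n0 \<in> verts P" using real[OF b c(1) c(2)[symmetric]] by blast
  obtain D0 where D0: "is_component_at P (verts P) n0 D0" using component_exists[OF n0] by blast
  have D0P: "D0 \<subseteq> verts P" "n0 \<in> D0" "connected_set P D0" using D0 unfolding is_component_at_def by blast+
  define D where "D = restr P D0"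
  have finVP: "finite VP"
  proof (rule finite_subset)
    show "VP \<subseteq> prod_encode ` (verts B \<times> verts C)"
    proof
      fix n assume "n \<in> VP"
      then have "(p n, r n) \<in> verts B \<times> verts C" unfolding VP_def by simp
      then show "n \<in> prod_encode ` (verts B \<times> verts C)" using enc[of n] by (metis imageI)
    qed
    show "finite (prod_encode ` (verts B \<times> verts C))" using FD(2)[OF FB] FD(2)[OF FC] by simp
  qed
  have gD: "is_graph D" unfolding D_def using restr_graph[OF gP D0P(1)] .
  have cD: "connected_set D (verts D)" unfolding D_def using restr_conn[of D0 D0 P] D0P by simp
  have neD: "verts D \<noteq> {}" unfolding D_def using D0P by auto
  have FDD: "D \<in> finite_connected_graphs"
    unfolding finite_connected_graphs_def using gD cD neD finVP D0P(1) vP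
    unfolding D_def by (auto intro: finite_subset)
  have edB: "\<And>x y. (x,y) \<in> edges D \<Longrightarrow> (p x, p y) \<in> edges B"
    unfolding D_def restr_edges using EPp by blast
  have edC: "\<And>x y. (x,y) \<in> edges D \<Longrightarrow> (r x, r y) \<in> edges C"
    unfolding D_def restr_edges using EPp by blast
  have wDB: "weakconf D B p" unfolding D_def using restr_weakconf[OF D0 wB] .
  have wDC: "weakconf D C r" unfolding D_def using restr_weakconf[OF D0 wC] .
  have eDB: "epimorphism D B p"
    by (rule epi_from_weakconf[OF gD gB cD neD FD(4)[OF FB] edB wDB])
  have eDC: "epimorphism D C r"
    by (rule epi_from_weakconf[OF gD gC cD neD FD(4)[OF FC] edC wDC])
  have "confluent_epis D B p" "confluent_epis D C r"
    unfolding confluent_epis_def confluent_iff using FDD FB FC eDB eDC wDB wDC by auto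
  moreover have "\<forall>x\<in>verts D. f (p x) = g (r x)"
    unfolding D_def using D0P(1) VPp by auto
  ultimately show ?thesis using FDD by blast
qed

definition pt :: graph where "pt = ({0}, {(0,0)})"

lemma pt_verts: "verts pt = {0}" and pt_edges: "edges pt = {(0,0)}"
  unfolding pt_def verts_def edges_def by simp_all

lemma pt_F: "pt \<in> finite_connected_graphs"
  unfolding finite_connected_graphs_def is_graph_def
  using connected_singleton[of pt 0] pt_verts pt_edges by simp

lemma to_pt: assumes "G \<in> finite_connected_graphs" shows "confluent_epis G pt (\<lambda>_. 0)"
proof -
  note gG = FD(1)[OF assms] and cG = FD(4)[OF assms] and ne = FD(3)[OF assms]
  have gpt: "is_graph pt" and cpt: "connected_set pt (verts pt)" using FD[OF pt_F] by auto
  have w: "weakconf G pt (\<lambda>_. 0)"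
    unfolding weakconf_def
  proof (intro allI impI, elim conjE)
    fix Q K assume Q: "Q \<subseteq> verts pt" "connected_set pt Q"
      and K: "is_component G {x \<in> verts G. (0::nat) \<in> Q} K"
    show "(\<lambda>_. 0) ` K = Q"
    proof (cases "0 \<in> Q")
      case True
      then have Q0: "Q = {0}" using Q(1) pt_verts by auto
      have "{x \<in> verts G. (0::nat) \<in> Q} = verts G" using True by simp
      then have "K = verts G" using component_of_connected[OF cG] K by simp
      then show ?thesis using ne Q0 by auto
    next
      case False
      then show ?thesis using K unfolding is_component_def by simp
    qed
  qed
  have e: "epimorphism G pt (\<lambda>_. 0)"
    by (rule epi_from_weakconf[OF gG gpt cG ne cpt _ w]) (simp add: pt_edges)
  show ?thesis unfolding confluent_epis_def confluent_iff using assms pt_F e w by simp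
qed

lemma countable_classes: "countable (finite_connected_graphs // R)"
proof -
  have sub: "finite_connected_graphs \<subseteq> Collect finite \<times> Collect finite"
  proof
    fix G assume G: "G \<in> finite_connected_graphs"
    have "finite (verts G)" using FD(2)[OF G] .
    moreover have "edges G \<subseteq> verts G \<times> verts G" using FD(1)[OF G] unfolding is_graph_def by simp
    ultimately have "finite (edges G)" using finite_subset by blast
    then show "G \<in> Collect finite \<times> Collect finite" using \<open>finite (verts G)\<close>
      unfolding verts_def edges_def by (cases G) simp
  qed
  have "countable (Collect (finite :: nat set \<Rightarrow> bool) \<times> Collect (finite :: (nat \<times> nat) set \<Rightarrow> bool))"
    by (intro countable_SIGMA countable_Collect_finite)
  then have cF: "countable finite_connected_graphs" by (rule countable_subset[OF sub])
  have "finite_connected_graphs // R \<subseteq> (\<lambda>x. R `` {x}) ` finite_connected_graphs"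
    unfolding quotient_def by blast
  then show ?thesis by (rule countable_subset[OF _ countable_image[OF cF]])
qed

theorem corollary4p13:
  shows "projective_Fraisse_family finite_connected_graphs confluent_epis"
  unfolding projective_Fraisse_family_def
proof (intro conjI allI impI ballI)
  fix A assume "A \<in> finite_connected_graphs"
  then show "is_graph A" "finite (verts A)" using FD by auto
next
  fix A B f assume "confluent_epis A B f"
  then show "A \<in> finite_connected_graphs" "B \<in> finite_connected_graphs" "epimorphism A B f"
    unfolding confluent_epis_def confluent_iff by auto
next
  show "countable (finite_connected_graphs //
    {(A, B). A \<in> finite_connected_graphs \<and> B \<in> finite_connected_graphs \<and> graph_iso A B})"
    by (rule countable_classes)
next
  fix A B C f g assume h: "confluent_epis A B f \<and> confluent_epis B C g"
  then have 1: "epimorphism A B f" "weakconf A B f" "epimorphism B C g" "weakconf B C g"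
    "A \<in> finite_connected_graphs" "C \<in> finite_connected_graphs"
    unfolding confluent_epis_def confluent_iff by auto
  have "epimorphism A C (g \<circ> f)" using epi_comp[OF 1(1) 1(3)] .
  moreover have "weakconf A C (g \<circ> f)" using weakconf_comp[OF 1(1) 1(3) 1(2) 1(4)] .
  ultimately show "confluent_epis A C (g \<circ> f)"
    unfolding confluent_epis_def confluent_iff using 1(5,6) by simp
next
  fix A assume "A \<in> finite_connected_graphs"
  then show "confluent_epis A A id"
    unfolding confluent_epis_def confluent_iff using epi_id[of A] weakconf_id[of A] by simp
next
  fix B C assume B: "B \<in> finite_connected_graphs" and C: "C \<in> finite_connected_graphs"
  show "\<exists>D\<in>finite_connected_graphs. \<exists>f g. confluent_epis D B f \<and> confluent_epis D C g"
  proof -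
    obtain D f0 g0 where "D \<in> finite_connected_graphs" "confluent_epis D B f0" "confluent_epis D C g0"
      using amalgamation[OF to_pt[OF B] to_pt[OF C]] by blast
    then show ?thesis by blast
  qed
next
  fix A B C f g assume h: "confluent_epis B A f \<and> confluent_epis C A g"
  show "\<exists>D\<in>finite_connected_graphs. \<exists>f0 g0. confluent_epis D B f0 \<and> confluent_epis D C g0
           \<and> (\<forall>x\<in>verts D. f (f0 x) = g (g0 x))"
    using amalgamation[of B A f C g] h by (elim conjE) simp
qed

end
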